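(* Let $G=(V,E)$ be a finite simple graph with $V\neq\emptyset$ and let $w:V\to\mathbb{N}^+$ be a weight function on its vertices. Let $W=w[V]$ and $K=\alpha_w(G)$. Then $$\tilde{w}[E]\ \ge\ \frac{W^2}{K}-W .$$
   Context: For a function $f$ on a set $T$, $f[T]=\sum_{t\in T}f(t)$. For a set $F$ of edges of $G$, $\tilde{w}[F]=\sum_{uv\in F}\big(w(u)+w(v)\big)$. $\alpha_w(G)$ is the maximum of $w[I]$ over all independent sets $I\subseteq V$. *)

theory Defs
  imports Main Complex_Main
begin

definition simple_graph :: "'a set \<Rightarrow> 'a set set \<Rightarrow> bool" where
  "simple_graph V E \<longleftrightarrow> finite V \<and> (\<forall>e\<in>E. e \<subseteq> V \<and> card e = 2)"

definition independent_set :: "'a set \<Rightarrow> 'a set set \<Rightarrow> 'a set \<Rightarrow> bool" where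
  "independent_set V E I \<longleftrightarrow> I \<subseteq> V \<and> (\<forall>u\<in>I. \<forall>v\<in>I. {u, v} \<notin> E)"

definition alpha_w :: "'a set \<Rightarrow> 'a set set \<Rightarrow> ('a \<Rightarrow> nat) \<Rightarrow> nat" where
  "alpha_w V E w = Max {sum w I | I. independent_set V E I}"

text \<open>tilde-w[F] = sum over edges uv in F of w(u)+w(v).\<close>
definition edge_weight :: "('a \<Rightarrow> nat) \<Rightarrow> 'a set set \<Rightarrow> nat" where
  "edge_weight w F = (\<Sum>e\<in>F. sum w e)"

end

theory Submission
  imports Defs
begin

lemma caro_wei:
  fixes V :: "'a set" and E :: "'a set set" and w :: "'a \<Rightarrow> nat"
  assumes sg: "simple_graph V E"
  shows "finite S \<Longrightarrow> S \<subseteq> V \<Longrightarrow> \<exists>I. I \<subseteq> S \<and> independent_set V E I \<and>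
     (\<Sum>u\<in>S. real (w u) / real (card ({x\<in>V. {u,x}\<in>E} \<inter> S) + 1)) \<le> real (sum w I)"
proof (induction S rule: finite_psubset_induct)
  case (psubset S)
  let ?N = "\<lambda>u. {x\<in>V. {u,x}\<in>E}"
  let ?f = "\<lambda>T u. real (w u) / real (card (?N u \<inter> T) + 1)"
  have finV: "finite V" using sg by (simp add: simple_graph_def)
  have noloop: "\<And>u. u \<notin> ?N u"
  proof
    fix u assume "u \<in> ?N u"
    then have "{u} \<in> E" by simp
    with sg show False by (auto simp: simple_graph_def)
  qed
  show ?case
  proof (cases "S = {}")
    case True
    then show ?thesis by (auto simp: independent_set_def)
  next
    case False
    have finS: "finite S" by fact
    let ?M = "\<lambda>v. insert v (?N v) \<inter> S"
    have key: "(\<Sum>v\<in>S. \<Sum>u\<in>?M v. ?f S u) = (\<Sum>u\<in>S. real (w u))"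
    proof -
      have "(\<Sum>v\<in>S. \<Sum>u\<in>?M v. ?f S u) = (\<Sum>v\<in>S. \<Sum>u\<in>S. if u \<in> ?M v then ?f S u else 0)"
        by (rule sum.cong) (auto simp: sum.If_cases[OF finS] Int_commute intro!: sum.cong)
      also have "\<dots> = (\<Sum>u\<in>S. \<Sum>v\<in>S. if u \<in> ?M v then ?f S u else 0)"
        by (rule sum.swap)
      also have "\<dots> = (\<Sum>u\<in>S. ?f S u * real (card (?M u)))"
      proof (rule sum.cong[OF refl])
        fix u assume uS: "u \<in> S"
        have "{v\<in>S. u \<in> ?M v} = ?M u" using uS psubset.prems by (auto simp: insert_commute)
        then show "(\<Sum>v\<in>S. if u \<in> ?M v then ?f S u else 0) = ?f S u * real (card (?M u))"
          by (simp add: sum.If_cases[OF finS] Int_def)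
      qed
      also have "\<dots> = (\<Sum>u\<in>S. real (w u))"
      proof (rule sum.cong[OF refl])
        fix u assume uS: "u \<in> S"
        have "?M u = insert u (?N u \<inter> S)" using uS by auto
        moreover have "finite (?N u \<inter> S)" using finS by simp
        moreover have "u \<notin> ?N u \<inter> S" using noloop[of u] by blast
        ultimately have "card (?M u) = card (?N u \<inter> S) + 1" by (simp only: card_insert_disjoint) simp
        then show "?f S u * real (card (?M u)) = real (w u)" by simp
      qed
      finally show ?thesis .
    qed
    have "\<exists>v\<in>S. (\<Sum>u\<in>?M v. ?f S u) \<le> real (w v)"
    proof (rule ccontr)
      assume "\<not> ?thesis"
      then have "\<forall>v\<in>S. real (w v) < (\<Sum>u\<in>?M v. ?f S u)" by auto
      then have "(\<Sum>v\<in>S. real (w v)) < (\<Sum>v\<in>S. \<Sum>u\<in>?M v. ?f S u)"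
        using False finS by (intro sum_strict_mono) auto
      with key show False by simp
    qed
    then obtain v where vS: "v \<in> S" and vle: "(\<Sum>u\<in>?M v. ?f S u) \<le> real (w v)" by blast
    let ?S' = "S - insert v (?N v)"
    have sub: "?S' \<subset> S" using vS by auto
    have "?S' \<subseteq> V" using psubset.prems by auto
    from psubset.IH[OF sub this] obtain I' where I': "I' \<subseteq> ?S'" "independent_set V E I'"
      "(\<Sum>u\<in>?S'. ?f ?S' u) \<le> real (sum w I')" by blast
    let ?I = "insert v I'"
    have vI': "v \<notin> I'" using I'(1) by auto
    have finI': "finite I'" using I'(1) finS finite_subset by blast
    have ind: "independent_set V E ?I"
    proof -
      have "{v,v} \<notin> E" using noloop[of v] vS psubset.prems by auto
      moreover have "\<forall>u\<in>I'. {v,u} \<notin> E \<and> {u,v} \<notin> E"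
        using I'(1) psubset.prems by (auto simp: insert_commute)
      ultimately show ?thesis using I'(2) vS psubset.prems by (auto simp: independent_set_def)
    qed
    have mono: "(\<Sum>u\<in>?S'. ?f S u) \<le> (\<Sum>u\<in>?S'. ?f ?S' u)"
    proof (rule sum_mono)
      fix u assume "u \<in> ?S'"
      have "card (?N u \<inter> ?S') \<le> card (?N u \<inter> S)"
        using finS by (intro card_mono) auto
      then show "?f S u \<le> ?f ?S' u"
        by (intro divide_left_mono) auto
    qed
    have split: "(\<Sum>u\<in>S. ?f S u) = (\<Sum>u\<in>?M v. ?f S u) + (\<Sum>u\<in>?S'. ?f S u)"
    proof -
      have "S = ?M v \<union> ?S'" by auto
      then have "(\<Sum>u\<in>S. ?f S u) = (\<Sum>u\<in>?M v \<union> ?S'. ?f S u)" by simp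
      also have "\<dots> = (\<Sum>u\<in>?M v. ?f S u) + (\<Sum>u\<in>?S'. ?f S u)"
        using finS by (intro sum.union_disjoint) auto
      finally show ?thesis .
    qed
    have "real (sum w ?I) = real (w v) + real (sum w I')" using vI' finI' by simp
    then have "(\<Sum>u\<in>S. ?f S u) \<le> real (sum w ?I)" using split mono vle I'(3) by linarith
    moreover have "?I \<subseteq> S" using I'(1) vS by auto
    ultimately show ?thesis using ind by blast
  qed
qed


lemma amgm_sum:
  fixes S :: "'a set" and a c :: "'a \<Rightarrow> real"
  assumes "finite S" "\<forall>u\<in>S. a u \<ge> 0 \<and> c u > 0"
    and Apos: "(\<Sum>u\<in>S. a u / c u) > 0"
  shows "(\<Sum>u\<in>S. a u)^2 \<le> (\<Sum>u\<in>S. a u / c u) * (\<Sum>u\<in>S. a u * c u)"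
proof -
  define A where "A = (\<Sum>u\<in>S. a u / c u)"
  define B where "B = (\<Sum>u\<in>S. a u * c u)"
  define W where "W = (\<Sum>u\<in>S. a u)"
  have W0: "W \<ge> 0" unfolding W_def using assms by (intro sum_nonneg) auto
  show ?thesis
  proof (cases "W = 0")
    case True
    have "B \<ge> 0" unfolding B_def using assms by (intro sum_nonneg) auto
    then show ?thesis using True Apos by (simp add: A_def B_def W_def[symmetric])
  next
    case False
    with W0 have Wp: "W > 0" by simp
    define t where "t = W / A"
    have tp: "t > 0" using Wp Apos by (simp add: t_def A_def)
    have hterm: "2 * a u \<le> t * (a u / c u) + a u * c u / t" if "u \<in> S" for u
    proof -
      have au: "a u \<ge> 0" and cu: "c u > 0" using assms that by auto
      have "t * (a u / c u) + a u * c u / t - 2 * a u = a u * (t - c u)^2 / (t * c u)"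
        using tp cu by (simp add: field_simps power2_eq_square)
      also have "\<dots> \<ge> 0" using au tp cu by simp
      finally show ?thesis by simp
    qed
    have "2 * W \<le> (\<Sum>u\<in>S. t * (a u / c u) + a u * c u / t)"
      unfolding W_def sum_distrib_left by (rule sum_mono) (use hterm in auto)
    also have "\<dots> = t * A + B / t"
      by (simp add: sum.distrib sum_distrib_left sum_divide_distrib A_def B_def)
    also have "\<dots> = W + A * B / W" using Wp Apos by (simp add: t_def A_def)
    finally have "W \<le> A * B / W" by simp
    then have "W * W \<le> A * B" using Wp by (simp add: field_simps)
    then show ?thesis by (simp add: A_def B_def W_def power2_eq_square)
  qed
qed

theorem theorem3p1:
  fixes V :: "'a set" and E :: "'a set set" and w :: "'a \<Rightarrow> nat"
  assumes "simple_graph V E" and "V \<noteq> {}" and "\<forall>v\<in>V. w v > 0"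
  shows "real (edge_weight w E) \<ge>
           real (sum w V) ^ 2 / real (alpha_w V E w) - real (sum w V)"
proof -
  let ?N = "\<lambda>u. {x\<in>V. {u,x}\<in>E}"
  let ?d = "\<lambda>u. card {e\<in>E. u \<in> e}"
  have finV: "finite V" using assms(1) by (simp add: simple_graph_def)
  have EV: "E \<subseteq> Pow V" using assms(1) by (auto simp: simple_graph_def)
  have finE: "finite E" using finite_subset[OF EV] finV by auto
  have deg: "card (?N u \<inter> V) = ?d u" if "u \<in> V" for u
  proof -
    have "bij_betw (\<lambda>x. {u,x}) (?N u \<inter> V) {e\<in>E. u \<in> e}"
    proof (rule bij_betwI')
      fix x y assume "x \<in> ?N u \<inter> V" "y \<in> ?N u \<inter> V"
      show "({u,x} = {u,y}) = (x = y)" by (metis doubleton_eq_iff)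
    next
      fix x assume "x \<in> ?N u \<inter> V" then show "{u,x} \<in> {e\<in>E. u \<in> e}" by auto
    next
      fix e assume e: "e \<in> {e\<in>E. u \<in> e}"
      then have "card e = 2" "e \<subseteq> V" using assms(1) by (auto simp: simple_graph_def)
      then obtain a b where ab: "e = {a,b}" "a \<noteq> b" by (meson card_2_iff)
      then have "\<exists>x. e = {u,x}" using e by auto
      then obtain x where "e = {u,x}" by blast
      then show "\<exists>x\<in>?N u \<inter> V. e = {u,x}" using e \<open>e \<subseteq> V\<close> by auto
    qed
    then show ?thesis by (rule bij_betw_same_card)
  qed
  have ew: "edge_weight w E = (\<Sum>v\<in>V. w v * ?d v)"
  proof -
    have "edge_weight w E = (\<Sum>e\<in>E. \<Sum>v\<in>V. if v \<in> e then w v else 0)"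
      unfolding edge_weight_def
    proof (rule sum.cong[OF refl])
      fix e assume "e \<in> E"
      then have "e \<subseteq> V" using EV by auto
      then have "V \<inter> e = e" by auto
      then show "sum w e = (\<Sum>v\<in>V. if v \<in> e then w v else 0)"
        by (simp add: sum.If_cases[OF finV])
    qed
    also have "\<dots> = (\<Sum>v\<in>V. \<Sum>e\<in>E. if v \<in> e then w v else 0)" by (rule sum.swap)
    also have "\<dots> = (\<Sum>v\<in>V. w v * ?d v)"
      by (rule sum.cong[OF refl]) (simp add: sum.If_cases[OF finE] Int_def mult.commute)
    finally show ?thesis .
  qed
  obtain I where I: "I \<subseteq> V" "independent_set V E I"
    "(\<Sum>u\<in>V. real (w u) / real (card (?N u \<inter> V) + 1)) \<le> real (sum w I)"
    using caro_wei[OF assms(1) finV subset_refl] by blast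
  define A where "A = (\<Sum>u\<in>V. real (w u) / real (?d u + 1))"
  define B where "B = (\<Sum>u\<in>V. real (w u) * real (?d u + 1))"
  define W where "W = real (sum w V)"
  define K where "K = real (alpha_w V E w)"
  have "A = (\<Sum>u\<in>V. real (w u) / real (card (?N u \<inter> V) + 1))"
    unfolding A_def by (rule sum.cong) (auto simp: deg)
  with I(3) have AI: "A \<le> real (sum w I)" by simp
  have "sum w I \<le> alpha_w V E w"
  proof -
    have fin: "finite {sum w I | I. independent_set V E I}"
    proof -
      have "{sum w I | I. independent_set V E I} \<subseteq> sum w ` Pow V"
        by (auto simp: independent_set_def)
      then show ?thesis using finV finite_subset by blast
    qed
    show ?thesis unfolding alpha_w_def using I(2) by (intro Max_ge[OF fin]) auto
  qed
  then have "real (sum w I) \<le> K" unfolding K_def by (simp only: of_nat_le_iff)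
  then have AK: "A \<le> K" using AI by linarith
  have Apos: "A > 0" unfolding A_def
    using assms(2,3) finV by (intro sum_pos) auto
  have CS: "W^2 \<le> A * B"
    unfolding W_def A_def B_def of_nat_sum
    by (rule amgm_sum[OF finV]) (use assms(3) Apos A_def in auto)
  have Bge: "B \<ge> 0" unfolding B_def by (intro sum_nonneg) auto
  have Kpos: "K > 0" using AK Apos by simp
  have "W^2 \<le> K * B" using CS AK Bge by (meson mult_right_mono order_trans)
  then have "W^2 / K \<le> B" using Kpos by (simp add: divide_le_eq mult.commute)
  moreover have "B = real (edge_weight w E) + W"
    unfolding B_def ew W_def by (simp add: sum.distrib algebra_simps of_nat_sum)
  ultimately show ?thesis by (simp add: W_def K_def)
qed

end
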